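(* Let $d\ge1$ and let $\boldsymbol{w}_i,\boldsymbol{w}_j\in\mathbb{R}^d$ be independent with $\boldsymbol{w}_i,\boldsymbol{w}_j\sim\mathcal{N}(0,\mathbf{I}_d)$. Then $w_{ij}=\|\boldsymbol{w}_i+\boldsymbol{w}_j\|_2$ has probability density $$p(w_{ij})=\frac{w_{ij}^{d-1}e^{-w_{ij}^2/4}}{2^{d-1}\Gamma(\frac d2)},\quad w_{ij}\ge0.$$ Consequently, if $\boldsymbol{w}_1,\dots,\boldsymbol{w}_m$ ($m\ge2$) are i.i.d. $\mathcal{N}(0,\mathbf{I}_d)$ (IIDRFs), the RF-conformity satisfies $\rho_{\mathrm{IIDRF}}(\boldsymbol{x},\boldsymbol{y})=e^{v^2}$ for all $\boldsymbol{x},\boldsymbol{y}\in\mathbb{R}^d$, where $v=\|\boldsymbol{x}+\boldsymbol{y}\|_2$.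
   Context: RF-conformity: $\rho(\boldsymbol{x},\boldsymbol{y})=\frac{\Gamma(d/2)}{m(m-1)}\sum_{i=1}^m\sum_{j\ne i}\mathbb{E}\big(\sum_{k\ge0}\frac{v^{2k}w_{ij}^{2k}}{2^{2k}k!\,\Gamma(k+d/2)}\big)$ with $w_{ij}=\|\boldsymbol{w}_i+\boldsymbol{w}_j\|_2$ and $v=\|\boldsymbol{x}+\boldsymbol{y}\|_2$. *)

theory Defs
  imports "HOL-Probability.Probability"
begin

text \<open>Euclidean space R^d is modelled as real^'n with d = CARD('n).
  The standard Gaussian N(0, I_d) has density prod_i phi(x_i) w.r.t. Lebesgue measure.\<close>

definition std_gauss_density :: "real ^ 'n \<Rightarrow> real" where
  "std_gauss_density x = (\<Prod>i\<in>UNIV. std_normal_density (x $ i))"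

definition wij_density :: "nat \<Rightarrow> real \<Rightarrow> real" where
  "wij_density d r = (if 0 \<le> r then r ^ (d - 1) * exp (- r\<^sup>2 / 4) / (2 ^ (d - 1) * Gamma (real d / 2)) else 0)"

definition rf_conformity :: "'a measure \<Rightarrow> (nat \<Rightarrow> 'a \<Rightarrow> real ^ 'n) \<Rightarrow> nat \<Rightarrow> real ^ 'n \<Rightarrow> real ^ 'n \<Rightarrow> real" where
  "rf_conformity M W m x y =
     (let d = CARD('n); v = norm (x + y) in
      Gamma (real d / 2) / (real m * (real m - 1)) *
      (\<Sum>i<m. \<Sum>j\<in>{..<m} - {i}.
         (\<integral>\<omega>. (\<Sum>k. v ^ (2*k) * (norm (W i \<omega> + W j \<omega>)) ^ (2*k)
                     / (2 ^ (2*k) * fact k * Gamma (real k + real d / 2))) \<partial>M)))"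

end

theory Submission
  imports Defs
begin

lemma std_gauss_density_eq:
  "std_gauss_density (x::real^'n) = exp (- (norm x)\<^sup>2 / 2) / sqrt (2*pi) ^ CARD('n)"
proof -
  have n: "(norm x)\<^sup>2 = (\<Sum>i\<in>UNIV. (x$i)\<^sup>2)"
    by (simp add: norm_vec_def L2_set_def sum_nonneg)
  have "std_gauss_density x = (\<Prod>i\<in>UNIV. exp (- (x$i)\<^sup>2 / 2)) / sqrt (2*pi) ^ CARD('n)"
    unfolding std_gauss_density_def std_normal_density_def
    by (simp add: prod.distrib prod_dividef)
  also have "(\<Prod>i\<in>UNIV. exp (- (x$i)\<^sup>2 / 2)) = exp (\<Sum>i\<in>UNIV. - (x$i)\<^sup>2 / 2)"
    by (simp add: exp_sum)
  also have "(\<Sum>i\<in>UNIV. - (x$i)\<^sup>2 / 2) = - (norm x)\<^sup>2 / 2"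
    by (simp add: n sum_divide_distrib sum_negf)
  finally show ?thesis .
qed

definition rho :: "nat \<Rightarrow> real \<Rightarrow> real" where
  "rho d r = indicator {0..} r * (real d * unit_ball_vol (real d) * r ^ (d - 1))"

lemma rho_nonneg: "rho d r \<ge> 0"
  by (auto simp: rho_def indicator_def)

lemma rho_measurable[measurable]: "rho d \<in> borel_measurable borel"
  unfolding rho_def by measurable

lemma distr_norm_lborel:
  "distr (lborel :: 'a::euclidean_space measure) borel norm = density lborel (\<lambda>r. ennreal (rho DIM('a) r))"
proof (rule measure_eqI_generator_eq[where E="range atMost" and \<Omega>=UNIV and A="\<lambda>i. {..real i}"])
  show "Int_stable (range atMost :: real set set)"
    by (auto simp: Int_stable_def)
  show "range atMost \<subseteq> Pow (UNIV :: real set)" by auto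
  show "sets (distr (lborel :: 'a measure) borel norm) = sigma_sets UNIV (range atMost)"
    by (simp add: borel_eq_atMost)
  show "sets (density lborel (\<lambda>r. ennreal (rho DIM('a) r))) = sigma_sets UNIV (range atMost)"
    by (simp add: borel_eq_atMost)
  show "range (\<lambda>i. {..real i}) \<subseteq> range atMost" by auto
  show "(\<Union>i. {..real i}) = UNIV"
    by (auto intro: real_arch_simple)
  have main: "emeasure (distr (lborel :: 'a measure) borel norm) {..t} =
      emeasure (density lborel (\<lambda>r. ennreal (rho DIM('a) r))) {..t}
     \<and> emeasure (distr (lborel :: 'a measure) borel norm) {..t} \<noteq> \<infinity>" for t :: real
  proof (cases "t \<ge> 0")
    case True
    have "emeasure (distr (lborel :: 'a measure) borel norm) {..t} = emeasure lborel (cball (0::'a) t)"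
      by (subst emeasure_distr) (auto intro!: arg_cong[where f="emeasure lborel"])
    also have "\<dots> = ennreal (unit_ball_vol (DIM('a)) * t ^ DIM('a))"
      using True by (rule emeasure_cball)
    finally have 1: "emeasure (distr (lborel :: 'a measure) borel norm) {..t} = ennreal (unit_ball_vol (DIM('a)) * t ^ DIM('a))" .
    have "emeasure (density lborel (\<lambda>r. ennreal (rho DIM('a) r))) {..t} =
        (\<integral>\<^sup>+r. ennreal (rho DIM('a) r) * indicator {..t} r \<partial>lborel)"
      by (subst emeasure_density) auto
    also have "\<dots> = (\<integral>\<^sup>+r. ennreal (real DIM('a) * unit_ball_vol (real DIM('a)) * r ^ (DIM('a) - 1)) * indicator {0..t} r \<partial>lborel)"
      by (intro nn_integral_cong) (auto simp: rho_def indicator_def)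
    also have "\<dots> = ennreal (unit_ball_vol (DIM('a)) * t ^ DIM('a) - unit_ball_vol (DIM('a)) * 0 ^ DIM('a))"
    proof (rule nn_integral_FTC_Icc[where F="\<lambda>r. unit_ball_vol (DIM('a)) * r ^ DIM('a)"])
      fix x :: real assume "x \<in> {0..t}"
      show "0 \<le> real DIM('a) * unit_ball_vol (real DIM('a)) * x ^ (DIM('a) - 1)"
        using \<open>x \<in> {0..t}\<close> by auto
      show "DERIV (\<lambda>r. unit_ball_vol (DIM('a)) * r ^ DIM('a)) x :> real DIM('a) * unit_ball_vol (real DIM('a)) * x ^ (DIM('a) - 1)"
        by (auto intro!: derivative_eq_intros)
    qed (use True in auto)
    also have "\<dots> = ennreal (unit_ball_vol (DIM('a)) * t ^ DIM('a))"
      using DIM_positive[where 'a='a] by (simp add: zero_power)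
    finally show ?thesis using 1 by simp
  next
    case False
    have "emeasure (distr (lborel :: 'a measure) borel norm) {..t} = emeasure lborel ({} :: 'a set)"
    proof -
      have "norm -` {..t} = ({} :: 'a set)"
        using False by (auto simp: not_le) (meson norm_ge_zero order.trans less_le_not_le)
      then show ?thesis by (subst emeasure_distr) auto
    qed
    moreover have "emeasure (density lborel (\<lambda>r. ennreal (rho DIM('a) r))) {..t} = (\<integral>\<^sup>+r. 0 \<partial>lborel)"
    proof -
      have "(\<lambda>r. ennreal (rho DIM('a) r) * indicator {..t} r) = (\<lambda>_. 0)"
        using False by (auto simp: rho_def indicator_def fun_eq_iff)
      then show ?thesis by (subst emeasure_density) auto
    qed
    ultimately show ?thesis by simp
  qed
  show "X \<in> range atMost \<Longrightarrow> emeasure (distr (lborel :: 'a measure) borel norm) X =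
      emeasure (density lborel (\<lambda>r. ennreal (rho DIM('a) r))) X" for X
    using main by auto
  show "emeasure (distr (lborel :: 'a measure) borel norm) {..real i} \<noteq> \<infinity>" for i
    using main[of "real i"] by blast
qed

lemma radial_nn_integral:
  fixes f :: "real \<Rightarrow> ennreal"
  assumes [measurable]: "f \<in> borel_measurable borel"
  shows "(\<integral>\<^sup>+x. f (norm x) \<partial>(lborel :: 'a::euclidean_space measure)) =
         (\<integral>\<^sup>+r. ennreal (rho DIM('a) r) * f r \<partial>lborel)"
proof -
  have "(\<integral>\<^sup>+x. f (norm x) \<partial>(lborel :: 'a measure)) = (\<integral>\<^sup>+r. f r \<partial>distr (lborel :: 'a measure) borel norm)"
    by (subst nn_integral_distr) auto
  also have "\<dots> = (\<integral>\<^sup>+r. ennreal (rho DIM('a) r) * f r \<partial>lborel)"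
    unfolding distr_norm_lborel by (subst nn_integral_density) auto
  finally show ?thesis .
qed

lemma nn_integral_lborel_translate:
  fixes f :: "'a::euclidean_space \<Rightarrow> ennreal"
  assumes [measurable]: "f \<in> borel_measurable borel"
  shows "(\<integral>\<^sup>+x. f (t + x) \<partial>lborel) = (\<integral>\<^sup>+x. f x \<partial>lborel)"
proof -
  have "(\<integral>\<^sup>+x. f (t + x) \<partial>lborel) = (\<integral>\<^sup>+x. f x \<partial>distr lborel borel ((+) t))"
    by (subst nn_integral_distr) auto
  then show ?thesis by (simp add: lborel_distr_plus)
qed

lemma gauss_exp_integral:
  assumes one: "(\<integral>\<^sup>+x. ennreal (std_gauss_density (x::real^'n)) \<partial>lborel) = 1"
  shows "(\<integral>\<^sup>+(x::real^'n). ennreal (exp (- (norm x)\<^sup>2)) \<partial>lborel) = ennreal (sqrt pi ^ CARD('n))"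
proof -
  let ?d = "CARD('n)"
  let ?I = "(\<integral>\<^sup>+(x::real^'n). ennreal (exp (- (norm x)\<^sup>2)) \<partial>lborel)"
  have s2: "sqrt 2 \<noteq> 0" by simp
  have "(1::ennreal) = (\<integral>\<^sup>+x. ennreal (std_gauss_density (x::real^'n)) \<partial>lborel)"
    using one by simp
  also have "\<dots> = (\<integral>\<^sup>+x. ennreal (std_gauss_density (x::real^'n)) \<partial>density (distr lborel borel (\<lambda>x. 0 + sqrt 2 *\<^sub>R x)) (\<lambda>_. \<bar>sqrt 2\<bar> ^ DIM(real^'n)))"
    by (subst lborel_affine[OF s2, of 0, symmetric]) simp
  also have "\<dots> = (\<integral>\<^sup>+(x::real^'n). ennreal (sqrt 2 ^ ?d) * ennreal (std_gauss_density (sqrt 2 *\<^sub>R x)) \<partial>lborel)"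
    by (subst nn_integral_density) (auto simp: nn_integral_distr std_gauss_density_eq ennreal_power)
  also have "\<dots> = (\<integral>\<^sup>+(x::real^'n). ennreal (1 / sqrt pi ^ ?d) * ennreal (exp (- (norm x)\<^sup>2)) \<partial>lborel)"
  proof (intro nn_integral_cong)
    fix x :: "real^'n"
    have "sqrt 2 ^ ?d * std_gauss_density (sqrt 2 *\<^sub>R x) = 1 / sqrt pi ^ ?d * exp (- (norm x)\<^sup>2)"
      by (simp add: std_gauss_density_eq power_mult_distrib real_sqrt_mult)
    then show "ennreal (sqrt 2 ^ ?d) * ennreal (std_gauss_density (sqrt 2 *\<^sub>R x)) = ennreal (1 / sqrt pi ^ ?d) * ennreal (exp (- (norm x)\<^sup>2))"
      by (simp add: ennreal_mult'[symmetric])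
  qed
  also have "\<dots> = ennreal (1 / sqrt pi ^ ?d) * ?I"
    by (subst nn_integral_cmult) auto
  finally have "ennreal (1 / sqrt pi ^ ?d) * ?I = 1" by simp
  then have "ennreal (sqrt pi ^ ?d) * (ennreal (1 / sqrt pi ^ ?d) * ?I) = ennreal (sqrt pi ^ ?d)" by simp
  then show ?thesis
    by (simp add: mult.assoc[symmetric] ennreal_mult'[symmetric])
qed

definition conv_dens :: "nat \<Rightarrow> real \<Rightarrow> real" where
  "conv_dens d r = exp (- r\<^sup>2 / 4) * sqrt pi ^ d / (sqrt (2*pi) ^ d)\<^sup>2"

lemma gauss_conv:
  assumes one: "(\<integral>\<^sup>+x. ennreal (std_gauss_density (x::real^'n)) \<partial>lborel) = 1"
  shows "(\<integral>\<^sup>+a. ennreal (std_gauss_density a) * ennreal (std_gauss_density (c - a)) \<partial>lborel)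
      = ennreal (conv_dens CARD('n) (norm (c::real^'n)))"
proof -
  let ?d = "CARD('n)"
  let ?K = "exp (- (norm c)\<^sup>2 / 4) / (sqrt (2*pi) ^ ?d)\<^sup>2"
  define t where "t = (1/2) *\<^sub>R c"
  have pt: "std_gauss_density a * std_gauss_density (c - a) = ?K * exp (- (norm (a - t))\<^sup>2)" for a :: "real^'n"
  proof -
    have "(norm a)\<^sup>2 / 2 + (norm (c - a))\<^sup>2 / 2 = (norm c)\<^sup>2 / 4 + (norm (a - t))\<^sup>2"
      unfolding t_def power2_norm_eq_inner
      by (simp add: inner_diff_left inner_diff_right inner_commute algebra_simps) (simp add: field_simps)
    then have "exp (- (norm a)\<^sup>2 / 2) * exp (- (norm (c - a))\<^sup>2 / 2) = exp (- (norm c)\<^sup>2 / 4) * exp (- (norm (a - t))\<^sup>2)"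
      by (simp add: exp_add[symmetric])
    then show ?thesis
      by (simp add: std_gauss_density_eq power2_eq_square)
  qed
  have "(\<integral>\<^sup>+a. ennreal (std_gauss_density a) * ennreal (std_gauss_density (c - a)) \<partial>lborel)
      = (\<integral>\<^sup>+a. ennreal ?K * ennreal (exp (- (norm (a - t))\<^sup>2)) \<partial>lborel)"
  proof (intro nn_integral_cong)
    fix a :: "real^'n"
    have nn: "0 \<le> std_gauss_density x" for x :: "real^'n" by (simp add: std_gauss_density_eq)
    show "ennreal (std_gauss_density a) * ennreal (std_gauss_density (c - a)) = ennreal ?K * ennreal (exp (- (norm (a - t))\<^sup>2))"
      by (simp add: ennreal_mult[symmetric] nn pt)
  qed
  also have "\<dots> = ennreal ?K * (\<integral>\<^sup>+a. ennreal (exp (- (norm (a - t))\<^sup>2)) \<partial>lborel)"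
    by (subst nn_integral_cmult) auto
  also have "(\<integral>\<^sup>+a. ennreal (exp (- (norm (a - t))\<^sup>2)) \<partial>lborel) = (\<integral>\<^sup>+(a::real^'n). ennreal (exp (- (norm a)\<^sup>2)) \<partial>lborel)"
    using nn_integral_lborel_translate[of "\<lambda>a. ennreal (exp (- (norm (a - t))\<^sup>2))" t] by simp
  also have "\<dots> = ennreal (sqrt pi ^ ?d)"
    by (rule gauss_exp_integral[OF one])
  finally show ?thesis
    by (simp add: conv_dens_def ennreal_mult'[symmetric])
qed

lemma std_gauss_density_measurable[measurable]: "(std_gauss_density :: real^'n \<Rightarrow> real) \<in> borel_measurable borel"
proof -
  have eq: "std_gauss_density = (\<lambda>x::real^'n. exp (- (norm x)\<^sup>2 / 2) / sqrt (2*pi) ^ CARD('n))"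
    by (simp add: fun_eq_iff std_gauss_density_eq)
  show ?thesis unfolding eq by measurable
qed

lemma std_gauss_density_nonneg: "0 \<le> std_gauss_density x"
  by (simp add: std_gauss_density_eq)

lemma conv_dens_measurable[measurable]: "conv_dens d \<in> borel_measurable borel"
  unfolding conv_dens_def by measurable

lemma (in prob_space) emeasure_distr_as_integral:
  assumes [measurable]: "Z \<in> measurable M N" "A \<in> sets N"
  shows "emeasure (distr M N Z) A = (\<integral>\<^sup>+\<omega>. indicator A (Z \<omega>) \<partial>M)"
proof -
  have "emeasure (distr M N Z) A = (\<integral>\<^sup>+x. indicator A x \<partial>distr M N Z)"
    by (subst nn_integral_indicator) auto
  also have "\<dots> = (\<integral>\<^sup>+\<omega>. indicator A (Z \<omega>) \<partial>M)"
    by (subst nn_integral_distr) auto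
  finally show ?thesis .
qed

lemma (in prob_space) sum_gauss_distributed:
  fixes X Y :: "'a \<Rightarrow> real^'n"
  assumes X: "distributed M lborel X (\<lambda>x. ennreal (std_gauss_density x))"
    and Y: "distributed M lborel Y (\<lambda>x. ennreal (std_gauss_density x))"
    and ind: "indep_var lborel X lborel Y"
  shows "distributed M lborel (\<lambda>\<omega>. X \<omega> + Y \<omega>) (\<lambda>c. ennreal (conv_dens CARD('n) (norm c)))"
proof -
  have Xm[measurable]: "X \<in> borel_measurable M" using distributed_measurable[OF X] by simp
  have Ym[measurable]: "Y \<in> borel_measurable M" using distributed_measurable[OF Y] by simp
  have one: "(\<integral>\<^sup>+x. ennreal (std_gauss_density (x::real^'n)) \<partial>lborel) = 1"
  proof -
    have "(\<integral>\<^sup>+x. ennreal (std_gauss_density (x::real^'n)) * 1 \<partial>lborel) = (\<integral>\<^sup>+\<omega>. 1 \<partial>M)"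
      by (rule distributed_nn_integral[OF X]) simp
    then show ?thesis by (simp add: emeasure_space_1)
  qed
  have J: "distributed M (lborel \<Otimes>\<^sub>M lborel) (\<lambda>x. (X x, Y x))
      (\<lambda>(x, y). ennreal (std_gauss_density x) * ennreal (std_gauss_density y))"
    by (rule distributed_joint_indep[OF _ _ X Y ind]) (auto intro: lborel.sigma_finite_measure_axioms)
  let ?g = "\<lambda>x::real^'n. ennreal (std_gauss_density x)"
  show ?thesis
    unfolding distributed_def
  proof (intro conjI)
    show "(\<lambda>c. ennreal (conv_dens CARD('n) (norm (c::real^'n)))) \<in> borel_measurable lborel" by measurable
    show "(\<lambda>\<omega>. X \<omega> + Y \<omega>) \<in> measurable M lborel" by simp
    show "distr M lborel (\<lambda>\<omega>. X \<omega> + Y \<omega>) = density lborel (\<lambda>c. ennreal (conv_dens CARD('n) (norm c)))"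
    proof (rule measure_eqI)
      fix A :: "(real^'n) set" assume "A \<in> sets (distr M lborel (\<lambda>\<omega>. X \<omega> + Y \<omega>))"
      then have A[measurable]: "A \<in> sets borel" by simp
      have "emeasure (distr M lborel (\<lambda>\<omega>. X \<omega> + Y \<omega>)) A = (\<integral>\<^sup>+\<omega>. indicator A (X \<omega> + Y \<omega>) \<partial>M)"
        by (rule emeasure_distr_as_integral) auto
      also have "\<dots> = (\<integral>\<^sup>+p. (case p of (x, y) \<Rightarrow> ?g x * ?g y) * indicator A (fst p + snd p) \<partial>(lborel \<Otimes>\<^sub>M lborel))"
        by (subst distributed_nn_integral[OF J]) auto
      also have "\<dots> = (\<integral>\<^sup>+x. \<integral>\<^sup>+y. ?g x * ?g y * indicator A (x + y) \<partial>lborel \<partial>lborel)"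
        by (subst lborel.nn_integral_fst[symmetric]) auto
      also have "\<dots> = (\<integral>\<^sup>+x. \<integral>\<^sup>+c. ?g x * ?g (c - x) * indicator A c \<partial>lborel \<partial>lborel)"
      proof (rule nn_integral_cong)
        fix x :: "real^'n"
        show "(\<integral>\<^sup>+y. ?g x * ?g y * indicator A (x + y) \<partial>lborel) = (\<integral>\<^sup>+c. ?g x * ?g (c - x) * indicator A c \<partial>lborel)"
          using nn_integral_lborel_translate[of "\<lambda>y. ?g x * ?g y * indicator A (x + y)" "- x"]
          by simp
      qed
      also have "\<dots> = (\<integral>\<^sup>+c. \<integral>\<^sup>+x. ?g x * ?g (c - x) * indicator A c \<partial>lborel \<partial>lborel)"
        by (rule lborel_pair.Fubini'[symmetric]) simp
      also have "\<dots> = (\<integral>\<^sup>+c. ennreal (conv_dens CARD('n) (norm c)) * indicator A c \<partial>lborel)"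
      proof (intro nn_integral_cong)
        fix c :: "real^'n"
        show "(\<integral>\<^sup>+x. ?g x * ?g (c - x) * indicator A c \<partial>lborel) = ennreal (conv_dens CARD('n) (norm c)) * indicator A c"
          by (subst nn_integral_multc) (auto simp: gauss_conv[OF one])
      qed
      also have "\<dots> = emeasure (density lborel (\<lambda>c. ennreal (conv_dens CARD('n) (norm c)))) A"
        by (subst emeasure_density) auto
      finally show "emeasure (distr M lborel (\<lambda>\<omega>. X \<omega> + Y \<omega>)) A = emeasure (density lborel (\<lambda>c. ennreal (conv_dens CARD('n) (norm c)))) A" .
    qed simp
  qed
qed

lemma rho_conv:
  assumes d: "d \<ge> 1"
  shows "rho d r * conv_dens d r = wij_density d r"
proof (cases "r \<ge> 0")
  case False then show ?thesis by (simp add: rho_def wij_density_def)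
next
  case True
  have pw: "pi powr (real d / 2) = sqrt pi ^ d"
    by (simp add: powr_half_sqrt[symmetric] powr_realpow[symmetric] powr_powr)
  have gm: "Gamma (real d / 2 + 1) = real d / 2 * Gamma (real d / 2)"
    using d by (intro Gamma_plus1) (auto dest: nonpos_Ints_nonpos)
  have s2: "sqrt 2 ^ (d * 2) = (2::real) ^ d"
    by (simp add: power_mult[symmetric] mult.commute[of d] power_mult)
  have sq: "(sqrt (2*pi) ^ d)\<^sup>2 = 2 ^ d * (sqrt pi ^ d * sqrt pi ^ d)"
    using s2 by (simp add: power_mult_distrib real_sqrt_mult power2_eq_square[symmetric] power_even_eq[symmetric] mult.commute power_mult[symmetric])
  have p2: "(2::real) ^ d = 2 * 2 ^ (d - 1)"
    using d by (cases d) auto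
  have gpos: "Gamma (real d / 2) > 0" using d by (intro Gamma_real_pos) auto
  have spos: "sqrt pi ^ d > 0" by simp
  have "rho d r * conv_dens d r = real d * (sqrt pi ^ d / Gamma (real d / 2 + 1)) * r ^ (d - 1) *
      (exp (- r\<^sup>2 / 4) * sqrt pi ^ d / (sqrt (2*pi) ^ d)\<^sup>2)"
    using True by (simp add: rho_def conv_dens_def unit_ball_vol_def pw)
  also have "\<dots> = real d * (sqrt pi ^ d / (real d / 2 * Gamma (real d / 2))) * r ^ (d - 1) *
      (exp (- r\<^sup>2 / 4) * sqrt pi ^ d / ((2 * 2 ^ (d - 1)) * (sqrt pi ^ d * sqrt pi ^ d)))"
    by (simp only: gm sq p2)
  also have "\<dots> = wij_density d r"
    using True d gpos spos by (simp add: wij_density_def field_simps)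
  finally show ?thesis .
qed

lemma wij_density_measurable[measurable]: "wij_density d \<in> borel_measurable borel"
  unfolding wij_density_def by measurable

lemma (in prob_space) norm_conv_distributed:
  fixes Z :: "'a \<Rightarrow> real^'n"
  assumes Z: "distributed M lborel Z (\<lambda>c. ennreal (conv_dens CARD('n) (norm c)))"
  shows "distributed M lborel (\<lambda>\<omega>. norm (Z \<omega>)) (\<lambda>r. ennreal (wij_density CARD('n) r))"
  unfolding distributed_def
proof (intro conjI)
  have Zm[measurable]: "Z \<in> borel_measurable M" using distributed_measurable[OF Z] by simp
  show "(\<lambda>r. ennreal (wij_density CARD('n) r)) \<in> borel_measurable lborel" by measurable
  show "(\<lambda>\<omega>. norm (Z \<omega>)) \<in> measurable M lborel" by simp
  show "distr M lborel (\<lambda>\<omega>. norm (Z \<omega>)) = density lborel (\<lambda>r. ennreal (wij_density CARD('n) r))"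
  proof (rule measure_eqI)
    fix A :: "real set" assume "A \<in> sets (distr M lborel (\<lambda>\<omega>. norm (Z \<omega>)))"
    then have A[measurable]: "A \<in> sets borel" by simp
    have "emeasure (distr M lborel (\<lambda>\<omega>. norm (Z \<omega>))) A = (\<integral>\<^sup>+\<omega>. indicator A (norm (Z \<omega>)) \<partial>M)"
      by (rule emeasure_distr_as_integral) auto
    also have "\<dots> = (\<integral>\<^sup>+(c::real^'n). ennreal (conv_dens CARD('n) (norm c)) * indicator A (norm c) \<partial>lborel)"
      using distributed_nn_integral[OF Z, of "\<lambda>c. indicator A (norm c)"] by simp
    also have "\<dots> = (\<integral>\<^sup>+r. ennreal (rho DIM(real^'n) r) * (ennreal (conv_dens CARD('n) r) * indicator A r) \<partial>lborel)"
      by (rule radial_nn_integral[where f="\<lambda>r. ennreal (conv_dens CARD('n) r) * indicator A r"]) simp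
    also have "\<dots> = (\<integral>\<^sup>+r. ennreal (wij_density CARD('n) r) * indicator A r \<partial>lborel)"
    proof (rule nn_integral_cong)
      fix r :: real
      have "ennreal (rho CARD('n) r) * ennreal (conv_dens CARD('n) r) = ennreal (wij_density CARD('n) r)"
        using rho_conv[of "CARD('n)" r] rho_nonneg[of "CARD('n)" r]
        by (simp add: ennreal_mult[symmetric] conv_dens_def)
      then show "ennreal (rho DIM(real^'n) r) * (ennreal (conv_dens CARD('n) r) * indicator A r) = ennreal (wij_density CARD('n) r) * indicator A r"
        by (simp add: mult.assoc[symmetric])
    qed
    also have "\<dots> = emeasure (density lborel (\<lambda>r. ennreal (wij_density CARD('n) r))) A"
      by (subst emeasure_density) auto
    finally show "emeasure (distr M lborel (\<lambda>\<omega>. norm (Z \<omega>))) A = emeasure (density lborel (\<lambda>r. ennreal (wij_density CARD('n) r))) A" .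
  qed simp
qed

lemma nn_integral_atLeast_SUP:
  fixes F :: "real \<Rightarrow> real" and h :: "nat \<Rightarrow> real"
  assumes [measurable]: "F \<in> borel_measurable borel" and nn: "\<And>x. 0 \<le> F x"
    and h: "incseq h" "filterlim h at_top sequentially"
  shows "(\<integral>\<^sup>+x. ennreal (F x * indicator {0..} x) \<partial>lborel) = (SUP i. \<integral>\<^sup>+x. ennreal (F x * indicator {0..h i} x) \<partial>lborel)"
proof -
  let ?f = "\<lambda>i x. ennreal (F x * indicator {0..h i} x)"
  have inc: "incseq ?f"
    using h(1) nn by (auto simp: incseq_def le_fun_def split: split_indicator intro: order_trans)
  have "(SUP i. ?f i x) = ennreal (F x * indicator {0..} x)" for x
  proof (rule LIMSEQ_unique[OF LIMSEQ_SUP])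
    show "incseq (\<lambda>i. ?f i x)" using inc by (auto simp: incseq_def le_fun_def)
    have "eventually (\<lambda>i. x \<le> h i) sequentially"
      using h(2) by (simp add: filterlim_at_top)
    then have "eventually (\<lambda>i. ?f i x = ennreal (F x * indicator {0..} x)) sequentially"
      by eventually_elim (auto split: split_indicator)
    then show "(\<lambda>i. ?f i x) \<longlonglongrightarrow> ennreal (F x * indicator {0..} x)"
      by (rule tendsto_eventually)
  qed
  then have "(\<integral>\<^sup>+x. ennreal (F x * indicator {0..} x) \<partial>lborel) = (\<integral>\<^sup>+x. (SUP i. ?f i x) \<partial>lborel)"
    by simp
  also have "\<dots> = (SUP i. \<integral>\<^sup>+x. ?f i x \<partial>lborel)"
    by (rule nn_integral_monotone_convergence_SUP[OF inc]) simp
  finally show ?thesis .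
qed

lemma moment_integral:
  "(\<integral>\<^sup>+r. ennreal (r ^ n * exp (- r\<^sup>2 / 4) * indicator {0..} r) \<partial>lborel)
     = ennreal (2 ^ n * Gamma ((real n + 1) / 2))"
proof -
  define c where "c = (real n - 1) / 2"
  define f where "f t = t powr c / exp t" for t :: real
  have fm[measurable]: "f \<in> borel_measurable borel" unfolding f_def by measurable
  have fnn: "0 \<le> f t" for t unfolding f_def by simp
  have "(f has_integral Gamma ((real n + 1) / 2)) {0..}"
    unfolding f_def c_def using Gamma_integral_real[of "(real n + 1) / 2"]
    by (simp add: field_simps)
  then have "(\<integral>\<^sup>+t. ennreal (indicator {0..} t * f t) \<partial>lborel) = ennreal (Gamma ((real n + 1) / 2))"
    by (rule nn_integral_has_integral_lebesgue[OF fnn])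
  then have G: "(\<integral>\<^sup>+t. ennreal (f t * indicator {0..} t) \<partial>lborel) = ennreal (Gamma ((real n + 1) / 2))"
    by (simp add: mult.commute)
  have inc1: "incseq (\<lambda>i. real i)" by (simp add: incseq_def)
  have inc2: "incseq (\<lambda>i. (real i)\<^sup>2 / 4)" by (auto simp: incseq_def intro!: power_mono)
  have lim1: "filterlim (\<lambda>i. real i) at_top sequentially" by (rule filterlim_real_sequentially)
  have lim2: "filterlim (\<lambda>i. (real i)\<^sup>2 / 4) at_top sequentially"
    by real_asymp
  define F where "F r = (r / 2) ^ n * exp (- r\<^sup>2 / 4)" for r :: real
  have Fm[measurable]: "F \<in> borel_measurable borel" unfolding F_def by measurable
  have Fnn: "0 \<le> F r * indicator {0..} r" for r unfolding F_def by (auto split: split_indicator)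
  have step: "(\<integral>\<^sup>+t. ennreal (f t * indicator {0..(real i)\<^sup>2 / 4} t) \<partial>lborel)
      = (\<integral>\<^sup>+r. ennreal (F r * indicator {0..} r * indicator {0..real i} r) \<partial>lborel)" for i :: nat
  proof -
    have "(\<integral>\<^sup>+t. ennreal (f t * indicator {(\<lambda>r. r\<^sup>2 / 4) 0..(\<lambda>r. r\<^sup>2 / 4) (real i)} t) \<partial>lborel)
      = (\<integral>\<^sup>+r. ennreal (f ((\<lambda>r. r\<^sup>2 / 4) r) * (\<lambda>r. r / 2) r * indicator {0..real i} r) \<partial>lborel)"
    proof (rule nn_integral_substitution)
      show "set_borel_measurable borel {(\<lambda>r. r\<^sup>2 / 4) 0..(\<lambda>r. r\<^sup>2 / 4) (real i)} f"
        by (simp add: set_borel_measurable_def)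
      show "((\<lambda>r. r\<^sup>2 / 4) has_real_derivative r / 2) (at r)" for r :: real
        by (auto intro!: derivative_eq_intros)
      show "continuous_on {0..real i} (\<lambda>r. r / 2)"
        by (auto intro!: continuous_intros)
    qed auto
    also have "\<dots> = (\<integral>\<^sup>+r. ennreal (F r * indicator {0..} r * indicator {0..real i} r) \<partial>lborel)"
    proof (rule nn_integral_cong_AE)
      show "AE r in lborel. ennreal (f ((\<lambda>r. r\<^sup>2 / 4) r) * (\<lambda>r. r / 2) r * indicator {0..real i} r)
           = ennreal (F r * indicator {0..} r * indicator {0..real i} r)"
      proof (rule eventually_mono[OF AE_lborel_singleton[of 0]])
        fix r :: real assume "r \<noteq> 0"
        show "ennreal (f ((\<lambda>r. r\<^sup>2 / 4) r) * (\<lambda>r. r / 2) r * indicator {0..real i} r)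
           = ennreal (F r * indicator {0..} r * indicator {0..real i} r)"
        proof (cases "r > 0")
          case True
          have "(r\<^sup>2 / 4) powr c * (r / 2) = (r / 2) ^ n"
          proof -
            have "r\<^sup>2 / 4 = (r/2) powr (2::real)" using True by (simp add: powr_realpow power_divide)
            then have "(r\<^sup>2 / 4) powr c = (r / 2) powr (2 * c)" by (simp only: powr_powr)
            then have "(r\<^sup>2 / 4) powr c * (r / 2) = (r / 2) powr (2 * c) * (r / 2) powr 1"
              using True by simp
            also have "\<dots> = (r / 2) powr (2 * c + 1)" by (simp add: powr_add)
            also have "2 * c + 1 = real n" by (simp add: c_def field_simps)
            also have "(r / 2) powr real n = (r / 2) ^ n" using True by (simp add: powr_realpow)
            finally show ?thesis .
          qed
          then show ?thesis using True
            by (auto simp: f_def F_def split: split_indicator simp flip: mult.assoc)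
               (simp add: divide_simps mult.assoc exp_minus)
        next
          case False
          then have "r < 0" using \<open>r \<noteq> 0\<close> by simp
          then show ?thesis by (simp add: indicator_def)
        qed
      qed
    qed
    finally show ?thesis by simp
  qed
  have "(\<integral>\<^sup>+r. ennreal (F r * indicator {0..} r) \<partial>lborel)
       = (SUP i. \<integral>\<^sup>+r. ennreal (F r * indicator {0..} r * indicator {0..real i} r) \<partial>lborel)"
  proof -
    have "(\<integral>\<^sup>+r. ennreal (F r * indicator {0..} r) \<partial>lborel) = (\<integral>\<^sup>+r. ennreal (F r * indicator {0..} r * indicator {0..} r) \<partial>lborel)"
      by (intro nn_integral_cong) (auto split: split_indicator)
    also have "\<dots> = (SUP i. \<integral>\<^sup>+r. ennreal (F r * indicator {0..} r * indicator {0..real i} r) \<partial>lborel)"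
      by (rule nn_integral_atLeast_SUP[where F="\<lambda>r. F r * indicator {0..} r", OF _ Fnn inc1 lim1]) simp
    finally show ?thesis .
  qed
  also have "\<dots> = (SUP i. \<integral>\<^sup>+t. ennreal (f t * indicator {0..(real i)\<^sup>2 / 4} t) \<partial>lborel)"
    by (simp only: step)
  also have "\<dots> = (\<integral>\<^sup>+t. ennreal (f t * indicator {0..} t) \<partial>lborel)"
    by (rule nn_integral_atLeast_SUP[OF fm fnn inc2 lim2, symmetric])
  finally have FG: "(\<integral>\<^sup>+r. ennreal (F r * indicator {0..} r) \<partial>lborel) = ennreal (Gamma ((real n + 1) / 2))"
    using G by simp
  have "(\<integral>\<^sup>+r. ennreal (r ^ n * exp (- r\<^sup>2 / 4) * indicator {0..} r) \<partial>lborel)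
      = (\<integral>\<^sup>+r. ennreal (2 ^ n) * ennreal (F r * indicator {0..} r) \<partial>lborel)"
  proof (rule nn_integral_cong)
    fix r :: real
    have e: "r ^ n * exp (- r\<^sup>2 / 4) * indicator {0..} r = 2 ^ n * (F r * indicator {0..} r)"
      by (simp add: F_def power_divide)
    show "ennreal (r ^ n * exp (- r\<^sup>2 / 4) * indicator {0..} r) = ennreal (2 ^ n) * ennreal (F r * indicator {0..} r)"
      by (subst e) (rule ennreal_mult, simp, rule Fnn)
  qed
  also have "\<dots> = ennreal (2 ^ n) * ennreal (Gamma ((real n + 1) / 2))"
    by (subst nn_integral_cmult) (auto simp: FG)
  also have "\<dots> = ennreal (2 ^ n * Gamma ((real n + 1) / 2))"
    by (simp add: ennreal_mult[symmetric] less_imp_le[OF Gamma_real_pos])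
  finally show ?thesis .
qed

definition cterm :: "nat \<Rightarrow> real \<Rightarrow> nat \<Rightarrow> real \<Rightarrow> real" where
  "cterm d v k r = v ^ (2*k) * r ^ (2*k) / (2 ^ (2*k) * fact k * Gamma (real k + real d / 2))"

lemma cterm_nonneg: "0 \<le> cterm d v k r"
proof -
  have "0 < Gamma (real k + real d / 2) \<or> k = 0 \<and> d = 0"
    by (cases "k = 0 \<and> d = 0") (auto intro!: Gamma_real_pos)
  then show ?thesis
    by (auto simp: cterm_def power_mult zero_le_power2 intro!: divide_nonneg_nonneg mult_nonneg_nonneg)
qed

lemma cterm_summable:
  assumes d: "d \<ge> 1"
  shows "summable (\<lambda>k. cterm d v k r)"
proof -
  obtain N :: nat where N: "v\<^sup>2 * r\<^sup>2 < real N" using reals_Archimedean2 by blast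
  show ?thesis
  proof (rule summable_ratio_test[where c="1/2" and N=N])
  fix k assume k: "N \<le> k"
  have gp: "Gamma (real k + real d / 2) > 0" using d by (intro Gamma_real_pos) auto
  have gs: "Gamma (real (Suc k) + real d / 2) = (real k + real d / 2) * Gamma (real k + real d / 2)"
  proof -
    have "Gamma ((real k + real d / 2) + 1) = (real k + real d / 2) * Gamma (real k + real d / 2)"
      using d by (intro Gamma_plus1) (auto dest: nonpos_Ints_nonpos)
    then show ?thesis by (simp add: add_ac)
  qed
  have rec: "cterm d v (Suc k) r = cterm d v k r * (v\<^sup>2 * r\<^sup>2 / (4 * (real k + 1) * (real k + real d / 2)))"
  proof -
    have "cterm d v (Suc k) r = (v ^ (2*k) * r ^ (2*k) * (v\<^sup>2 * r\<^sup>2)) /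
        ((2 ^ (2*k) * fact k * Gamma (real k + real d / 2)) * (4 * (real k + 1) * (real k + real d / 2)))"
    proof -
      have p: "x ^ (2 * Suc k) = x ^ (2 * k) * x\<^sup>2" for x :: real
        by (simp add: power_add[symmetric])
      show ?thesis unfolding cterm_def gs p fact_Suc
        by (simp add: mult_ac)
    qed
    also have "\<dots> = cterm d v k r * (v\<^sup>2 * r\<^sup>2 / (4 * (real k + 1) * (real k + real d / 2)))"
      unfolding cterm_def by (rule times_divide_times_eq[symmetric])
    finally show ?thesis .
  qed
  have le: "v\<^sup>2 * r\<^sup>2 / (4 * (real k + 1) * (real k + real d / 2)) \<le> 1/2"
  proof -
    have one: "1 \<le> 2 * (real k + real d / 2)" using d by simp
    have "v\<^sup>2 * r\<^sup>2 \<le> real k + 1"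
      using N k of_nat_mono[OF k, where 'a=real] by linarith
    also have "\<dots> \<le> (real k + 1) * (2 * (real k + real d / 2))"
      using mult_left_mono[OF one, of "real k + 1"] by simp
    finally have A: "v\<^sup>2 * r\<^sup>2 \<le> (real k + 1) * (2 * (real k + real d / 2))" .
    have pos: "0 < 4 * (real k + 1) * (real k + real d / 2)" using d by (intro mult_pos_pos) auto
    have eq: "4 * (real k + 1) * (real k + real d / 2) = 2 * ((real k + 1) * (2 * (real k + real d / 2)))"
      by (simp add: algebra_simps)
    show ?thesis
      by (subst pos_divide_le_eq[OF pos], simp only: eq) (use A in linarith)
  qed
  show "norm (cterm d v (Suc k) r) \<le> 1/2 * norm (cterm d v k r)"
  proof -
    have "cterm d v (Suc k) r \<le> cterm d v k r * (1/2)"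
      unfolding rec by (rule mult_left_mono[OF le cterm_nonneg])
    then show ?thesis using cterm_nonneg[of d v k r] cterm_nonneg[of d v "Suc k" r] by simp
  qed
qed simp
qed

lemma cterm_measurable[measurable]: "cterm d v k \<in> borel_measurable borel"
  unfolding cterm_def by measurable

lemma wij_density_nonneg: "d \<ge> 1 \<Longrightarrow> 0 \<le> wij_density d r"
  using Gamma_real_pos[of "real d / 2"] by (auto simp: wij_density_def)

lemma conf_term_integral:
  assumes d: "d \<ge> 1"
  shows "(\<integral>\<^sup>+r. ennreal (wij_density d r * cterm d v k r) \<partial>lborel) = ennreal (v ^ (2*k) / (fact k * Gamma (real d / 2)))"
proof -
  have g1: "Gamma (real d / 2) > 0" using d by (intro Gamma_real_pos) auto
  have g2: "Gamma (real k + real d / 2) > 0" using d by (intro Gamma_real_pos) auto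
  define C where "C = v ^ (2*k) / (2 ^ (d - 1) * Gamma (real d / 2) * (2 ^ (2*k) * fact k * Gamma (real k + real d / 2)))"
  have Cnn: "0 \<le> C" unfolding C_def using g1 g2 by (simp add: power_mult zero_le_power2)
  have eq: "wij_density d r * cterm d v k r = C * (r ^ (2*k + d - 1) * exp (- r\<^sup>2 / 4) * indicator {0..} r)" for r
  proof (cases "r \<ge> 0")
    case True
    have "2*k + d - 1 = (d - 1) + 2*k" using d by simp
    then have pw: "r ^ (2*k + d - 1) = r ^ (d - 1) * r ^ (2*k)"
      by (simp only: power_add)
    have "wij_density d r * cterm d v k r = (r ^ (d - 1) * exp (- r\<^sup>2 / 4) / (2 ^ (d - 1) * Gamma (real d / 2))) *
        (v ^ (2*k) * r ^ (2*k) / (2 ^ (2*k) * fact k * Gamma (real k + real d / 2)))"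
      using True by (simp add: wij_density_def cterm_def)
    also have "\<dots> = C * (r ^ (d - 1) * r ^ (2*k) * exp (- r\<^sup>2 / 4))"
      unfolding C_def by (simp only: times_divide_times_eq times_divide_eq_right times_divide_eq_left divide_divide_eq_left mult_ac)
    also have "\<dots> = C * (r ^ (2*k + d - 1) * exp (- r\<^sup>2 / 4) * indicator {0..} r)"
      using True pw by (simp add: indicator_def)
    finally show ?thesis .
  next
    case False then show ?thesis by (simp add: wij_density_def)
  qed
  have "(\<integral>\<^sup>+r. ennreal (wij_density d r * cterm d v k r) \<partial>lborel)
      = (\<integral>\<^sup>+r. ennreal C * ennreal (r ^ (2*k + d - 1) * exp (- r\<^sup>2 / 4) * indicator {0..} r) \<partial>lborel)"
  proof (rule nn_integral_cong)
    fix r :: real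
    have nn2: "0 \<le> r ^ (2*k + d - 1) * exp (- r\<^sup>2 / 4) * indicator {0..} r"
      by (auto split: split_indicator)
    show "ennreal (wij_density d r * cterm d v k r) = ennreal C * ennreal (r ^ (2*k + d - 1) * exp (- r\<^sup>2 / 4) * indicator {0..} r)"
      unfolding eq by (rule ennreal_mult[OF Cnn nn2])
  qed
  also have "\<dots> = ennreal C * ennreal (2 ^ (2*k + d - 1) * Gamma ((real (2*k + d - 1) + 1) / 2))"
    using moment_integral[of "2*k + d - 1"] by (subst nn_integral_cmult) auto
  also have "(real (2*k + d - 1) + 1) / 2 = real k + real d / 2"
    using d by (simp add: of_nat_diff)
  also have "ennreal C * ennreal (2 ^ (2*k + d - 1) * Gamma (real k + real d / 2)) = ennreal (C * (2 ^ (2*k + d - 1) * Gamma (real k + real d / 2)))"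
    using Cnn g2 by (simp add: ennreal_mult)
  also have "C * (2 ^ (2*k + d - 1) * Gamma (real k + real d / 2)) = v ^ (2*k) / (fact k * Gamma (real d / 2))"
  proof -
    have "2*k + d - 1 = 2*k + (d - 1)" using d by simp
    then have "(2::real) ^ (2*k + d - 1) = 2 ^ (2*k) * 2 ^ (d - 1)"
      by (simp only: power_add)
    then show ?thesis using g1 g2 unfolding C_def by (simp add: field_simps)
  qed
  finally show ?thesis .
qed

lemma conf_integral:
  assumes d: "d \<ge> 1"
  shows "(\<integral>r. wij_density d r * (\<Sum>k. cterm d v k r) \<partial>lborel) = exp (v\<^sup>2) / Gamma (real d / 2)"
proof -
  have g1: "Gamma (real d / 2) > 0" using d by (intro Gamma_real_pos) auto
  have nn: "0 \<le> wij_density d r * (\<Sum>k. cterm d v k r)" for r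
    using wij_density_nonneg[OF d, of r] suminf_nonneg[OF cterm_summable[OF d, of v r] cterm_nonneg]
    by (rule mult_nonneg_nonneg)
  have "(\<integral>\<^sup>+r. ennreal (wij_density d r * (\<Sum>k. cterm d v k r)) \<partial>lborel)
      = (\<integral>\<^sup>+r. (\<Sum>k. ennreal (wij_density d r * cterm d v k r)) \<partial>lborel)"
  proof (rule nn_integral_cong)
    fix r
    have "(\<Sum>k. ennreal (wij_density d r * cterm d v k r)) = ennreal (\<Sum>k. wij_density d r * cterm d v k r)"
      using wij_density_nonneg[OF d] cterm_nonneg cterm_summable[OF d]
      by (intro suminf_ennreal2) (auto intro: summable_mult)
    also have "(\<Sum>k. wij_density d r * cterm d v k r) = wij_density d r * (\<Sum>k. cterm d v k r)"
      using cterm_summable[OF d] by (rule suminf_mult)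
    finally show "ennreal (wij_density d r * (\<Sum>k. cterm d v k r)) = (\<Sum>k. ennreal (wij_density d r * cterm d v k r))" ..
  qed
  also have "\<dots> = (\<Sum>k. \<integral>\<^sup>+r. ennreal (wij_density d r * cterm d v k r) \<partial>lborel)"
    by (rule nn_integral_suminf) measurable
  also have "\<dots> = (\<Sum>k. ennreal (v ^ (2*k) / (fact k * Gamma (real d / 2))))"
    by (simp add: conf_term_integral[OF d])
  also have "\<dots> = ennreal (exp (v\<^sup>2) / Gamma (real d / 2))"
  proof -
    have "(\<lambda>k. (v\<^sup>2) ^ k /\<^sub>R fact k / Gamma (real d / 2)) sums (exp (v\<^sup>2) / Gamma (real d / 2))"
      by (intro sums_divide exp_converges)
    moreover have "(\<lambda>k. (v\<^sup>2) ^ k /\<^sub>R fact k / Gamma (real d / 2)) = (\<lambda>k. v ^ (2*k) / (fact k * Gamma (real d / 2)))"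
      by (rule ext) (simp add: power_mult field_simps power_mult_distrib[symmetric] mult.commute[of 2] flip: power_mult)
    ultimately have s: "(\<lambda>k. v ^ (2*k) / (fact k * Gamma (real d / 2))) sums (exp (v\<^sup>2) / Gamma (real d / 2))"
      by simp
    have nnk: "0 \<le> v ^ (2*k) / (fact k * Gamma (real d / 2))" for k
      using g1 by (simp add: power_mult)
    have "(\<Sum>k. ennreal (v ^ (2*k) / (fact k * Gamma (real d / 2)))) = ennreal (\<Sum>k. v ^ (2*k) / (fact k * Gamma (real d / 2)))"
      using s nnk by (intro suminf_ennreal2) (auto simp: sums_iff)
    then show ?thesis using s by (simp add: sums_iff)
  qed
  finally have N: "(\<integral>\<^sup>+r. ennreal (wij_density d r * (\<Sum>k. cterm d v k r)) \<partial>lborel) = ennreal (exp (v\<^sup>2) / Gamma (real d / 2))" .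
  have "(\<integral>r. wij_density d r * (\<Sum>k. cterm d v k r) \<partial>lborel) = enn2real (\<integral>\<^sup>+r. ennreal (wij_density d r * (\<Sum>k. cterm d v k r)) \<partial>lborel)"
    by (rule integral_eq_nn_integral) (auto simp: nn)
  also have "\<dots> = exp (v\<^sup>2) / Gamma (real d / 2)"
    using g1 by (simp add: N)
  finally show ?thesis .
qed


theorem lemma4p1:
  fixes M :: "'a measure" and W :: "nat \<Rightarrow> 'a \<Rightarrow> real ^ 'n" and m :: nat
  assumes "prob_space M"
    and "m \<ge> 2"
    and "\<And>i. i < m \<Longrightarrow> distributed M lborel (W i) (\<lambda>x. ennreal (std_gauss_density x))"
    and "prob_space.indep_vars M (\<lambda>_. borel) W {..<m}"
  shows "(\<forall>i<m. \<forall>j<m. i \<noteq> j \<longrightarrow>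
            distributed M lborel (\<lambda>\<omega>. norm (W i \<omega> + W j \<omega>))
              (\<lambda>r. ennreal (wij_density CARD('n) r)))
       \<and> (\<forall>x y. rf_conformity M W m x y = exp ((norm (x + y))\<^sup>2))"
proof -
  interpret P: prob_space M by fact
  have d: "CARD('n) \<ge> 1" by (simp add: Suc_le_eq)
  have pair: "distributed M lborel (\<lambda>\<omega>. norm (W i \<omega> + W j \<omega>)) (\<lambda>r. ennreal (wij_density CARD('n) r))"
    if ij: "i < m" "j < m" "i \<noteq> j" for i j
  proof -
    have "P.indep_var (PiM {i} (\<lambda>_. borel)) (\<lambda>\<omega>. restrict (\<lambda>i. W i \<omega>) {i})
        (PiM {j} (\<lambda>_. borel)) (\<lambda>\<omega>. restrict (\<lambda>i. W i \<omega>) {j})"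
      by (rule P.indep_var_restrict[OF assms(4)]) (use ij in auto)
    then have "P.indep_var lborel ((\<lambda>f. f i) \<circ> (\<lambda>\<omega>. restrict (\<lambda>i. W i \<omega>) {i}))
        lborel ((\<lambda>f. f j) \<circ> (\<lambda>\<omega>. restrict (\<lambda>i. W i \<omega>) {j}))"
      by (rule P.indep_var_compose) auto
    then have ind: "P.indep_var lborel (W i) lborel (W j)"
      by (simp add: comp_def)
    show ?thesis
      by (rule P.norm_conv_distributed[OF P.sum_gauss_distributed[OF assms(3)[OF ij(1)] assms(3)[OF ij(2)] ind]])
  qed
  have conf: "rf_conformity M W m x y = exp ((norm (x + y))\<^sup>2)" for x y :: "real^'n"
  proof -
    define v where "v = norm (x + y)"
    define c where "c = exp (v\<^sup>2) / Gamma (real CARD('n) / 2)"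
    have inner: "(\<integral>\<omega>. (\<Sum>k. v ^ (2*k) * (norm (W i \<omega> + W j \<omega>)) ^ (2*k)
                     / (2 ^ (2*k) * fact k * Gamma (real k + real CARD('n) / 2))) \<partial>M) = c"
      if ij: "i < m" "j \<in> {..<m} - {i}" for i j
    proof -
      have "(\<integral>\<omega>. (\<Sum>k. v ^ (2*k) * (norm (W i \<omega> + W j \<omega>)) ^ (2*k)
                     / (2 ^ (2*k) * fact k * Gamma (real k + real CARD('n) / 2))) \<partial>M)
          = (\<integral>\<omega>. (\<Sum>k. cterm CARD('n) v k (norm (W i \<omega> + W j \<omega>))) \<partial>M)"
        by (simp add: cterm_def)
      also have "\<dots> = (\<integral>r. wij_density CARD('n) r * (\<Sum>k. cterm CARD('n) v k r) \<partial>lborel)"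
        by (rule distributed_integral[OF pair, symmetric]) (use ij in \<open>auto simp: wij_density_nonneg[OF d]\<close>)
      also have "\<dots> = c"
        unfolding c_def by (rule conf_integral[OF d])
      finally show ?thesis .
    qed
    have card: "card ({..<m} - {i}) = m - 1" if "i < m" for i
      using that by simp
    have "rf_conformity M W m x y = Gamma (real CARD('n) / 2) / (real m * (real m - 1)) *
        (\<Sum>i<m. \<Sum>j\<in>{..<m} - {i}. c)"
      unfolding rf_conformity_def Let_def v_def[symmetric]
      by (intro arg_cong2[where f="(*)"] refl sum.cong) (auto simp: inner)
    also have "(\<Sum>i<m. \<Sum>j\<in>{..<m} - {i}. c) = real m * (real m - 1) * c"
      using assms(2) by (simp add: card of_nat_diff)
    also have "Gamma (real CARD('n) / 2) / (real m * (real m - 1)) * (real m * (real m - 1) * c) = exp (v\<^sup>2)"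
    proof -
      have b: "real m * (real m - 1) \<noteq> 0" using assms(2) by simp
      have g0: "Gamma (real CARD('n) / 2) > 0" using d by (intro Gamma_real_pos) auto
      then have g: "Gamma (real CARD('n) / 2) \<noteq> 0" by linarith
      have "Gamma (real CARD('n) / 2) / (real m * (real m - 1)) * (real m * (real m - 1) * c)
          = Gamma (real CARD('n) / 2) * c"
        using b by simp
      also have "\<dots> = exp (v\<^sup>2)" unfolding c_def using g by simp
      finally show ?thesis .
    qed
    finally show ?thesis by (simp add: v_def)
  qed
  show ?thesis using pair conf by blast
qed

end
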